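(* Let $S=\{0,1,2,\dots\}$, $\lambda,\mu>0$, $\theta=\lambda/\mu$, and let $p^*_t(x,y)$ be the unique transition function on $S$ whose infinitesimal rates are $q(i,i+1)=\lambda$; $q(i,i+k)=0$ for $k\ge 2$; $q(i,i-k)=\mu$ for $i\ge1$, $1\le k\le i$; $q(i,i)=-(\lambda+i\mu)$; all other entries $0$ (equivalently, the minimal solution of the Kolmogorov backward equations for these rates, which is stochastic). For $t\ge0$, $x,n\in S$ define $$R^*_t(\delta_x,n)=\frac{\theta^n}{(\theta+1)_n}+e^{-(\theta+n)\mu t}\sum_{\rho=0}^{n}\frac{(\theta(e^{\mu t}-1))^\rho}{\rho!}\Big(\mathbf 1\{x\ge n-\rho\}-\frac{\theta^{n-\rho}}{(\theta+1)_{n-\rho}}\Big).$$ Then for all $x,y\in S$ and $t\ge0$, $$p^*_t(x,y)=R^*_t(\delta_x,y)-R^*_t(\delta_x,y+1).$$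
   Context: $(a)_n$ is the rising factorial: $(a)_0=1$, $(a)_n=a(a+1)\cdots(a+n-1)$ for $n\ge1$. *)

theory Defs
  imports Complex_Main
begin

definition qrate :: "real \<Rightarrow> real \<Rightarrow> nat \<Rightarrow> nat \<Rightarrow> real" where
  "qrate lam mu i j =
     (if j = Suc i then lam
      else if j < i then mu
      else if j = i then -(lam + real i * mu)
      else 0)"

definition transition_function :: "(real \<Rightarrow> nat \<Rightarrow> nat \<Rightarrow> real) \<Rightarrow> bool" where
  "transition_function P \<longleftrightarrow>
     (\<forall>t\<ge>0. \<forall>x y. P t x y \<ge> 0) \<and>
     (\<forall>t\<ge>0. \<forall>x. summable (P t x) \<and> (\<Sum>y. P t x y) \<le> 1) \<and>
     (\<forall>x y. P 0 x y = (if x = y then 1 else 0)) \<and>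
     (\<forall>s\<ge>0. \<forall>t\<ge>0. \<forall>x y. P (s + t) x y = (\<Sum>k. P s x k * P t k y)) \<and>
     (\<forall>x. ((\<lambda>t. P t x x) \<longlongrightarrow> 1) (at_right 0))"

definition has_qmatrix :: "(real \<Rightarrow> nat \<Rightarrow> nat \<Rightarrow> real) \<Rightarrow> (nat \<Rightarrow> nat \<Rightarrow> real) \<Rightarrow> bool" where
  "has_qmatrix P q \<longleftrightarrow>
     (\<forall>x y. ((\<lambda>t. P t x y) has_real_derivative q x y) (at_right 0))"

definition Rstar :: "real \<Rightarrow> real \<Rightarrow> real \<Rightarrow> nat \<Rightarrow> nat \<Rightarrow> real" where
  "Rstar \<theta> mu t x n =
     \<theta> ^ n / pochhammer (\<theta> + 1) n
     + exp (-(\<theta> + real n) * mu * t) *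
       (\<Sum>\<rho>=0..n. (\<theta> * (exp (mu * t) - 1)) ^ \<rho> / fact \<rho> *
          ((if x \<ge> n - \<rho> then 1 else 0) - \<theta> ^ (n - \<rho>) / pochhammer (\<theta> + 1) (n - \<rho>)))"

end

theory Submission
  imports Defs "HOL-Analysis.Analysis"
begin

definition Qop :: "real \<Rightarrow> real \<Rightarrow> (nat \<Rightarrow> real) \<Rightarrow> nat \<Rightarrow> real" where
  "Qop lam mu \<phi> x = lam * \<phi> (Suc x) + mu * (\<Sum>k<x. \<phi> k) - (lam + real x * mu) * \<phi> x"

lemma Qop_add: "Qop lam mu (\<lambda>k. f k + g k) x = Qop lam mu f x + Qop lam mu g x"
  by (simp add: Qop_def sum.distrib algebra_simps)
lemma Qop_diff: "Qop lam mu (\<lambda>k. f k - g k) x = Qop lam mu f x - Qop lam mu g x"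
  by (simp add: Qop_def sum_subtractf algebra_simps)
lemma Qop_const_plus: "Qop lam mu (\<lambda>k. a + f k) x = Qop lam mu f x"
  by (simp add: Qop_def sum.distrib algebra_simps)
lemma Qop_mult: "Qop lam mu (\<lambda>k. a * f k) x = a * Qop lam mu f x"
  by (simp add: Qop_def sum_distrib_left algebra_simps)
lemma Qop_zero: "Qop lam mu (\<lambda>k. 0) x = 0"
  by (simp add: Qop_def)
lemma Qop_sum: "finite A \<Longrightarrow> Qop lam mu (\<lambda>k. \<Sum>\<rho>\<in>A. f \<rho> k) x = (\<Sum>\<rho>\<in>A. Qop lam mu (f \<rho>) x)"
proof (induction A rule: finite_induct)
  case empty then show ?case by (simp add: Qop_zero)
next
  case (insert a A) then show ?case by (simp add: Qop_add)
qed

lemma sum_ind: "(\<Sum>k<x. (if m \<le> k then 1 else 0::real)) = real (x - m)"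
  by (induction x) (auto simp: Suc_diff_le)

lemma Qop_ind: "Qop lam mu (\<lambda>k. (if m \<le> k then 1 else 0) - c) x
   = lam * (if Suc x = m then 1 else 0) - real m * mu * (if m \<le> x then 1 else 0)"
proof -
  have "Qop lam mu (\<lambda>k. (if m \<le> k then 1 else 0) - c) x = Qop lam mu (\<lambda>k. (if m \<le> k then 1 else 0)) x"
    using Qop_const_plus[of lam mu "-c" "\<lambda>k. (if m \<le> k then 1 else 0)" x] by simp
  also have "\<dots> = lam * (if Suc x = m then 1 else 0) - real m * mu * (if m \<le> x then 1 else 0)"
    unfolding Qop_def sum_ind
    by (cases "m \<le> x"; cases "Suc x = m") (auto simp: of_nat_diff algebra_simps)
  finally show ?thesis .
qed

definition cc :: "real \<Rightarrow> nat \<Rightarrow> real" where "cc \<theta> m = \<theta>^m / pochhammer (\<theta>+1) m"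
definition bet :: "real \<Rightarrow> real \<Rightarrow> real \<Rightarrow> nat \<Rightarrow> real" where
  "bet \<theta> mu t \<rho> = (\<theta>*(exp(mu*t)-1))^\<rho> / fact \<rho>"
definition dd :: "real \<Rightarrow> nat \<Rightarrow> nat \<Rightarrow> nat \<Rightarrow> real" where
  "dd \<theta> n x \<rho> = (if n - \<rho> \<le> x then 1 else 0) - cc \<theta> (n-\<rho>)"

lemma Rstar_alt: "Rstar \<theta> mu t x n = cc \<theta> n + exp (-(\<theta> + real n)*mu*t) * (\<Sum>\<rho>\<le>n. bet \<theta> mu t \<rho> * dd \<theta> n x \<rho>)"
  by (simp add: Rstar_def cc_def bet_def dd_def atLeast0AtMost)

lemma cc0: "cc \<theta> 0 = 1" by (simp add: cc_def)

lemma cc_Suc: "\<theta> > 0 \<Longrightarrow> (\<theta> + real (Suc j)) * cc \<theta> (Suc j) = \<theta> * cc \<theta> j"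
proof -
  assume th: "\<theta> > 0"
  define p where "p = pochhammer (\<theta>+1) j"
  define q where "q = \<theta> + real (Suc j)"
  have p: "p > 0" unfolding p_def using th by (intro pochhammer_pos) simp
  have q: "q > 0" unfolding q_def using th by simp
  have "pochhammer (\<theta>+1) (Suc j) = p * q"
    unfolding p_def q_def by (simp add: pochhammer_Suc algebra_simps)
  then have "(\<theta> + real (Suc j)) * cc \<theta> (Suc j) = q * (\<theta> * \<theta>^j / (p * q))"
    by (simp add: cc_def q_def)
  also have "\<dots> = \<theta> * (\<theta>^j / p)" using p q by simp
  also have "\<dots> = \<theta> * cc \<theta> j" by (simp add: cc_def p_def)
  finally show ?thesis .
qed

lemma bracket:
  assumes th: "\<theta> > 0" and rn: "\<rho> \<le> n"
  shows "\<theta> * (if Suc x = n - \<rho> then 1 else 0) - real (n-\<rho>) * (if n - \<rho> \<le> x then 1 else 0)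
    = -(\<theta> + real (n-\<rho>)) * dd \<theta> n x \<rho> + (if \<rho> < n then \<theta> * dd \<theta> n x (Suc \<rho>) else 0)"
proof (cases "\<rho> = n")
  case True then show ?thesis by (simp add: dd_def cc0)
next
  case False
  then obtain j where j: "n - \<rho> = Suc j" using rn by (metis Suc_diff_Suc le_neq_implies_less)
  then have j2: "n - Suc \<rho> = j" by simp
  have lt: "\<rho> < n" using False rn by simp
  have c: "(\<theta> + real (Suc j)) * cc \<theta> (Suc j) = \<theta> * cc \<theta> j" using cc_Suc th by blast
  show ?thesis
    unfolding dd_def j j2 using lt c
    by (cases "Suc j \<le> x"; cases "x = j") (auto simp: algebra_simps)
qed

lemma bet_deriv: "((\<lambda>t. bet \<theta> mu t \<rho>) has_real_derivative
   (if \<rho> = 0 then 0 else mu * (\<theta> * bet \<theta> mu t (\<rho>-1) + real \<rho> * bet \<theta> mu t \<rho>))) (at t)"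
proof (cases \<rho>)
  case 0 then show ?thesis by (simp add: bet_def)
next
  case (Suc r)
  define e where "e = exp (mu*t)"
  define a where "a = \<theta>*(e-1)"
  define F where "F = (fact r :: real)"
  have Fpos: "F > 0" by (simp add: F_def)
  have "((\<lambda>t. \<theta>*(exp(mu*t)-1)) has_real_derivative \<theta>*(exp(mu*t)*mu)) (at t)"
    by (auto intro!: derivative_eq_intros)
  from DERIV_power_Suc[OF this, of r]
  have "((\<lambda>t. (\<theta>*(exp(mu*t)-1))^Suc r) has_real_derivative (1 + real r) * (\<theta>*(e*mu) * a^r)) (at t)"
    by (simp add: a_def e_def)
  from DERIV_cdivide[OF this, of "fact (Suc r)"]
  have d: "((\<lambda>t. bet \<theta> mu t (Suc r)) has_real_derivative (1 + real r) * (\<theta>*(e*mu) * a^r) / ((1 + real r) * F)) (at t)"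
    by (simp add: bet_def[abs_def] F_def fact_Suc)
  have r1: "(1 + real r) \<noteq> 0" using of_nat_0_le_iff[of r] by linarith
  have e1: "(1 + real r) * (\<theta>*(e*mu) * a^r) / ((1 + real r) * F) = a^r*(\<theta>*e*mu)/F"
    by (simp only: mult_divide_mult_cancel_left[OF r1]) (simp add: ac_simps)
  have e2: "mu * (\<theta> * bet \<theta> mu t r + real (Suc r) * bet \<theta> mu t (Suc r))
      = mu*(\<theta>*(a^r/F) + (1 + real r)*(a * a^r/((1 + real r) * F)))"
    by (simp add: bet_def a_def e_def F_def fact_Suc)
  have e3a: "(1 + real r)*(a * a^r/((1 + real r) * F)) = a*a^r/F"
    by (simp only: times_divide_eq_right mult_divide_mult_cancel_left[OF r1])
  have e3: "mu*(\<theta>*(a^r/F) + (1 + real r)*(a * a^r/((1 + real r) * F))) = mu*a^r*(\<theta> + a)/F"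
    unfolding e3a using Fpos by (simp add: field_simps)
  have e4: "\<theta> + a = \<theta>*e" by (simp add: a_def algebra_simps)
  have eq: "(1 + real r) * (\<theta>*(e*mu) * a^r) / ((1 + real r) * F) = mu * (\<theta> * bet \<theta> mu t r + real (Suc r) * bet \<theta> mu t (Suc r))"
    unfolding e1 e2 e3 e4 by (simp add: ac_simps)
  show ?thesis using DERIV_cong[OF d eq] Suc by simp
qed

lemma G_deriv:
  assumes th: "\<theta> > 0"
  shows "((\<lambda>t. Rstar \<theta> mu t x n) has_real_derivative Qop (\<theta>*mu) mu (\<lambda>k. Rstar \<theta> mu t k n) x) (at t)"
proof -
  define E where "E t = exp (-(\<theta> + real n)*mu*t)" for t
  define b' where "b' t \<rho> = (if \<rho> = 0 then 0 else mu * (\<theta> * bet \<theta> mu t (\<rho>-1) + real \<rho> * bet \<theta> mu t \<rho>))" for t \<rho>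
  have fe: "(\<lambda>t. Rstar \<theta> mu t x n) = (\<lambda>t. cc \<theta> n + E t * (\<Sum>\<rho>\<le>n. bet \<theta> mu t \<rho> * dd \<theta> n x \<rho>))"
    by (simp add: Rstar_alt E_def)
  have dE: "(E has_real_derivative (-(\<theta> + real n)*mu) * E t) (at t)"
    unfolding E_def by (auto intro!: derivative_eq_intros simp: algebra_simps)
  have dS: "((\<lambda>t. \<Sum>\<rho>\<le>n. bet \<theta> mu t \<rho> * dd \<theta> n x \<rho>) has_real_derivative
      (\<Sum>\<rho>\<le>n. b' t \<rho> * dd \<theta> n x \<rho>)) (at t)"
  proof -
    have bd: "((\<lambda>t. bet \<theta> mu t \<rho>) has_real_derivative b' t \<rho>) (at t)" for \<rho>
      unfolding b'_def by (rule bet_deriv)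
    show ?thesis by (intro DERIV_sum DERIV_cmult_right bd)
  qed
  have d: "((\<lambda>t. Rstar \<theta> mu t x n) has_real_derivative
     (-(\<theta> + real n)*mu) * E t * (\<Sum>\<rho>\<le>n. bet \<theta> mu t \<rho> * dd \<theta> n x \<rho>) + E t * (\<Sum>\<rho>\<le>n. b' t \<rho> * dd \<theta> n x \<rho>)) (at t)"
  proof -
    have d0: "((\<lambda>t. cc \<theta> n + E t * (\<Sum>\<rho>\<le>n. bet \<theta> mu t \<rho> * dd \<theta> n x \<rho>)) has_real_derivative
       0 + ((-(\<theta> + real n)*mu) * E t * (\<Sum>\<rho>\<le>n. bet \<theta> mu t \<rho> * dd \<theta> n x \<rho>) + (\<Sum>\<rho>\<le>n. b' t \<rho> * dd \<theta> n x \<rho>) * E t)) (at t)"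
      by (intro DERIV_add DERIV_const DERIV_mult dE dS)
    show ?thesis unfolding fe by (rule DERIV_cong[OF d0]) (simp add: algebra_simps)
  qed
  define A where "A = (\<Sum>\<rho>\<le>n. bet \<theta> mu t \<rho> * (-(\<theta> + real (n-\<rho>)) * dd \<theta> n x \<rho>))"
  define B where "B = (\<Sum>\<rho><n. bet \<theta> mu t \<rho> * dd \<theta> n x (Suc \<rho>))"
  have lhs: "(-(\<theta> + real n)*mu) * E t * (\<Sum>\<rho>\<le>n. bet \<theta> mu t \<rho> * dd \<theta> n x \<rho>) + E t * (\<Sum>\<rho>\<le>n. b' t \<rho> * dd \<theta> n x \<rho>)
      = E t * mu * (A + \<theta> * B)"
  proof -
    have s1: "(\<Sum>\<rho>\<le>n. b' t \<rho> * dd \<theta> n x \<rho>) = mu * (\<Sum>\<rho>\<le>n. real \<rho> * bet \<theta> mu t \<rho> * dd \<theta> n x \<rho>)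
        + mu * \<theta> * (\<Sum>\<rho>\<le>n. (if \<rho> = 0 then 0 else bet \<theta> mu t (\<rho>-1) * dd \<theta> n x \<rho>))"
    proof -
      have "b' t \<rho> * dd \<theta> n x \<rho> = mu * (real \<rho> * bet \<theta> mu t \<rho> * dd \<theta> n x \<rho>)
          + mu * \<theta> * (if \<rho> = 0 then 0 else bet \<theta> mu t (\<rho>-1) * dd \<theta> n x \<rho>)" for \<rho>
        by (cases "\<rho> = 0") (simp_all add: b'_def algebra_simps)
      then show ?thesis by (simp add: sum.distrib sum_distrib_left)
    qed
    have s2: "(\<Sum>\<rho>\<le>n. (if \<rho> = 0 then 0 else bet \<theta> mu t (\<rho>-1) * dd \<theta> n x \<rho>)) = B"
      unfolding B_def by (subst sum.atMost_shift) simp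
    have s3: "A = (\<Sum>\<rho>\<le>n. real \<rho> * bet \<theta> mu t \<rho> * dd \<theta> n x \<rho>) - (\<theta> + real n) * (\<Sum>\<rho>\<le>n. bet \<theta> mu t \<rho> * dd \<theta> n x \<rho>)"
      unfolding A_def sum_distrib_left sum_subtractf[symmetric]
      by (rule sum.cong) (auto simp: of_nat_diff algebra_simps)
    show ?thesis unfolding s1 s2 s3 by (simp add: algebra_simps)
  qed
  have rhs: "Qop (\<theta>*mu) mu (\<lambda>k. Rstar \<theta> mu t k n) x = E t * mu * (A + \<theta> * B)"
  proof -
    have "Qop (\<theta>*mu) mu (\<lambda>k. Rstar \<theta> mu t k n) x
       = Qop (\<theta>*mu) mu (\<lambda>k. cc \<theta> n + E t * (\<Sum>\<rho>\<le>n. bet \<theta> mu t \<rho> * dd \<theta> n k \<rho>)) x"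
      by (simp add: Rstar_alt E_def)
    also have "\<dots> = E t * (\<Sum>\<rho>\<le>n. bet \<theta> mu t \<rho> * Qop (\<theta>*mu) mu (\<lambda>k. dd \<theta> n k \<rho>) x)"
      by (simp add: Qop_const_plus Qop_mult Qop_sum)
    also have "\<dots> = E t * (\<Sum>\<rho>\<le>n. bet \<theta> mu t \<rho> * (mu * (-(\<theta> + real (n-\<rho>)) * dd \<theta> n x \<rho>
          + (if \<rho> < n then \<theta> * dd \<theta> n x (Suc \<rho>) else 0))))"
    proof -
      have "Qop (\<theta>*mu) mu (\<lambda>k. dd \<theta> n k \<rho>) x = mu * (-(\<theta> + real (n-\<rho>)) * dd \<theta> n x \<rho>
          + (if \<rho> < n then \<theta> * dd \<theta> n x (Suc \<rho>) else 0))" if "\<rho> \<le> n" for \<rho>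
      proof -
        have "Qop (\<theta>*mu) mu (\<lambda>k. dd \<theta> n k \<rho>) x = mu * (\<theta> * (if Suc x = n - \<rho> then 1 else 0) - real (n-\<rho>) * (if n - \<rho> \<le> x then 1 else 0))"
          unfolding dd_def Qop_ind by (simp add: algebra_simps)
        then show ?thesis using bracket[OF th that, of x] by simp
      qed
      then show ?thesis by (intro arg_cong[where f="\<lambda>z. E t * z"] sum.cong) auto
    qed
    also have "\<dots> = E t * mu * (A + \<theta> * (\<Sum>\<rho>\<le>n. (if \<rho> < n then bet \<theta> mu t \<rho> * dd \<theta> n x (Suc \<rho>) else 0)))"
    proof -
      have pt: "bet \<theta> mu t \<rho> * (mu * (-(\<theta> + real (n-\<rho>)) * dd \<theta> n x \<rho>
          + (if \<rho> < n then \<theta> * dd \<theta> n x (Suc \<rho>) else 0)))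
          = mu * (bet \<theta> mu t \<rho> * (-(\<theta> + real (n-\<rho>)) * dd \<theta> n x \<rho>))
          + mu * \<theta> * (if \<rho> < n then bet \<theta> mu t \<rho> * dd \<theta> n x (Suc \<rho>) else 0)" for \<rho>
        by (simp add: algebra_simps)
      have "(\<Sum>\<rho>\<le>n. mu * (bet \<theta> mu t \<rho> * (-(\<theta> + real (n-\<rho>)) * dd \<theta> n x \<rho>))
          + mu * \<theta> * (if \<rho> < n then bet \<theta> mu t \<rho> * dd \<theta> n x (Suc \<rho>) else 0))
          = mu * A + mu * \<theta> * (\<Sum>\<rho>\<le>n. (if \<rho> < n then bet \<theta> mu t \<rho> * dd \<theta> n x (Suc \<rho>) else 0))"
        unfolding A_def by (simp only: sum.distrib sum_distrib_left)
      then show ?thesis unfolding pt by (simp add: algebra_simps)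
    qed
    also have "(\<Sum>\<rho>\<le>n. (if \<rho> < n then bet \<theta> mu t \<rho> * dd \<theta> n x (Suc \<rho>) else 0)) = B"
      unfolding B_def lessThan_Suc_atMost[symmetric] sum.lessThan_Suc by simp
    finally show ?thesis .
  qed
  show ?thesis using d lhs rhs by simp
qed


lemma maxprin:
  fixes u :: "real \<Rightarrow> nat \<Rightarrow> real" and lam mu :: real
  assumes lam: "lam \<ge> 0" and mu: "mu \<ge> 0"
    and cont: "\<And>x. continuous_on {0..} (\<lambda>t. u t x)"
    and der: "\<And>x t. t \<ge> 0 \<Longrightarrow> ((\<lambda>h. (u (t+h) x - u t x)/h) \<longlongrightarrow> Qop lam mu (u t) x) (at_right 0)"
    and init: "\<And>x. u 0 x \<le> 0"
    and bnd: "\<And>T. \<exists>C. \<forall>t\<in>{0..T}. \<forall>x. u t x \<le> C"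
    and T0: "T0 \<ge> 0"
  shows "u T0 x0 \<le> 0"
proof (rule ccontr)
  assume "\<not> ?thesis"
  then have pos: "u T0 x0 > 0" by simp
  define K where "K = lam + 1"
  define w where "w x = (2::real)^x" for x :: nat
  have wpos: "\<And>x. w x > 0" by (simp add: w_def)
  define \<epsilon> where "\<epsilon> = u T0 x0 / (2 * exp (K*T0) * w x0)"
  have epos: "\<epsilon> > 0" using pos wpos by (simp add: \<epsilon>_def)
  define Z where "Z t x = u t x - \<epsilon> * exp (K*t) * w x" for t x
  have Z0: "Z T0 x0 > 0"
    using pos wpos by (simp add: Z_def \<epsilon>_def field_simps)
  obtain C where C: "\<forall>t\<in>{0..T0}. \<forall>x. u t x \<le> C" using bnd by blast
  obtain X0 :: nat where X0: "C / \<epsilon> < real X0" using reals_Archimedean2 by blast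
  define X1 where "X1 = max X0 (Suc x0)"
  have x0X1: "x0 < X1" by (simp add: X1_def)
  have tail: "Z t x < 0" if "t \<in> {0..T0}" "X1 \<le> x" for t x
  proof -
    have "x < 2 ^ x" by (rule less_exp)
    then have "real x < 2 ^ x" by (metis of_nat_less_iff of_nat_numeral of_nat_power)
    moreover have "real X0 \<le> real x" using that by (simp add: X1_def)
    ultimately have "C / \<epsilon> < w x" using X0 unfolding w_def by linarith
    then have "C < \<epsilon> * w x" using epos by (simp add: field_simps)
    moreover have "\<epsilon> * w x \<le> \<epsilon> * exp (K*t) * w x"
      using that epos wpos by (simp add: K_def lam add_nonneg_nonneg)
    moreover have "u t x \<le> C" using C that by blast
    ultimately show ?thesis by (simp add: Z_def)
  qed
  have contZ: "continuous_on {0..} (\<lambda>t. Z t x)" for x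
    unfolding Z_def by (intro continuous_intros cont)
  define S where "S = {0..T0} \<inter> (\<Inter>x\<in>{..<X1}. {t\<in>{0..T0}. Z t x \<le> 0})"
  have "closed S"
    unfolding S_def
    by (intro closed_Int closed_INT ballI continuous_on_closed_Collect_le
        continuous_on_subset[OF contZ] continuous_on_const) auto
  have "0 \<in> S"
  proof -
    have "u 0 x \<le> \<epsilon> * w x" for x
      using init[of x] epos wpos[of x] by (smt (verit) mult_pos_pos)
    then show ?thesis using T0 by (auto simp: S_def Z_def)
  qed
  have Sle: "\<And>t. t \<in> S \<Longrightarrow> t \<le> T0" by (auto simp: S_def)
  then have bdd: "bdd_above S" by (auto simp: bdd_above_def)
  define ts where "ts = Sup S"
  have tsS: "ts \<in> S" unfolding ts_def
    using closed_contains_Sup[OF _ bdd \<open>closed S\<close>] \<open>0 \<in> S\<close> by blast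
  have ts0: "ts \<ge> 0" using tsS by (auto simp: S_def)
  have "T0 \<notin> S" using Z0 x0X1 unfolding S_def by force
  then have tsT: "ts < T0" using tsS Sle by (metis order_less_le)
  have allZ: "Z ts k \<le> 0" for k
  proof (cases "k < X1")
    case True then show ?thesis using tsS by (auto simp: S_def)
  next
    case False then show ?thesis using tail[of ts k] tsS by (auto simp: S_def)
  qed
  have expd: "((\<lambda>h. (exp (K*(ts+h)) - exp (K*ts))/h) \<longlongrightarrow> K * exp (K*ts)) (at_right 0)"
  proof -
    have "DERIV (\<lambda>t. exp (K*t)) ts :> exp (K*ts) * K"
      by (auto intro!: derivative_eq_intros)
    then have "((\<lambda>h. (exp (K*(ts+h)) - exp (K*ts))/h) \<longlongrightarrow> exp (K*ts) * K) (at 0)"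
      by (simp add: DERIV_def)
    then show ?thesis by (simp add: filterlim_at_split mult.commute)
  qed
  have dZ: "((\<lambda>h. (Z (ts+h) x - Z ts x)/h) \<longlongrightarrow>
      Qop lam mu (u ts) x - \<epsilon> * w x * (K * exp (K*ts))) (at_right 0)" for x
  proof -
    have "((\<lambda>h. (u (ts+h) x - u ts x)/h - \<epsilon> * w x * ((exp (K*(ts+h)) - exp (K*ts))/h)) \<longlongrightarrow>
      Qop lam mu (u ts) x - \<epsilon> * w x * (K * exp (K*ts))) (at_right 0)"
      by (intro tendsto_intros der ts0 expd)
    moreover have "(Z (ts+h) x - Z ts x)/h = (u (ts+h) x - u ts x)/h - \<epsilon> * w x * ((exp (K*(ts+h)) - exp (K*ts))/h)" for h
      by (cases "h = 0") (simp_all add: Z_def field_simps)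
    ultimately show ?thesis by simp
  qed
  have ev: "eventually (\<lambda>h. Z (ts+h) x \<le> 0) (at_right 0)" if "x < X1" for x
  proof -
    have rc: "((\<lambda>h. Z (ts+h) x) \<longlongrightarrow> Z ts x) (at_right 0)"
    proof -
      have "((\<lambda>h. Z ts x + h * ((Z (ts+h) x - Z ts x)/h)) \<longlongrightarrow> Z ts x + 0 * (Qop lam mu (u ts) x - \<epsilon> * w x * (K * exp (K*ts)))) (at_right 0)"
        by (intro tendsto_intros dZ)
      then have "((\<lambda>h. Z ts x + h * ((Z (ts+h) x - Z ts x)/h)) \<longlongrightarrow> Z ts x) (at_right 0)" by simp
      then show ?thesis
        by (rule Lim_transform_eventually)
          (auto simp: eventually_at_right_field intro!: exI[of _ 1])
    qed
    show ?thesis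
    proof (cases "Z ts x < 0")
      case True
      then have "eventually (\<lambda>h. Z (ts+h) x < 0) (at_right 0)"
        using rc by (simp add: order_tendsto_iff)
      then show ?thesis by eventually_elim simp
    next
      case False
      then have Zeq: "Z ts x = 0" using allZ[of x] by simp
      define E where "E = \<epsilon> * exp (K*ts)"
      have Epos: "E > 0" using epos by (simp add: E_def)
      have uk: "u ts k \<le> E * w k" for k using allZ[of k] by (simp add: Z_def E_def)
      have ux: "u ts x = E * w x" using Zeq by (simp add: Z_def E_def)
      have wmono: "w k \<le> w x" if "k < x" for k
        using that by (simp add: w_def)
      have "(\<Sum>k<x. u ts k) \<le> (\<Sum>k<x. E * w x)"
      proof (rule sum_mono)
        fix k assume "k \<in> {..<x}"
        then have "w k \<le> w x" using wmono by simp
        then have "E * w k \<le> E * w x" using Epos by simp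
        then show "u ts k \<le> E * w x" using uk[of k] by linarith
      qed
      then have sumb: "(\<Sum>k<x. u ts k) \<le> real x * (E * w x)" by simp
      have "Qop lam mu (u ts) x = lam * u ts (Suc x) + mu * (\<Sum>k<x. u ts k) - (lam + real x * mu) * (E * w x)"
        by (simp add: Qop_def ux)
      also have "\<dots> \<le> lam * (E * w (Suc x)) + mu * (real x * (E * w x)) - (lam + real x * mu) * (E * w x)"
        by (intro add_mono diff_mono mult_left_mono uk sumb lam mu order_refl)
      also have "\<dots> = E * w x * lam" by (simp add: w_def algebra_simps)
      finally have "Qop lam mu (u ts) x \<le> E * w x * lam" .
      moreover have "E * w x > 0" using Epos wpos[of x] by simp
      moreover have "\<epsilon> * w x * (K * exp (K*ts)) = E * w x * lam + E * w x"
        by (simp add: E_def K_def algebra_simps)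
      ultimately have neg: "Qop lam mu (u ts) x - \<epsilon> * w x * (K * exp (K*ts)) < 0"
        by linarith
      have "eventually (\<lambda>h. (Z (ts+h) x - Z ts x)/h < 0) (at_right 0)"
        using dZ[of x] neg by (simp add: order_tendsto_iff)
      moreover have "eventually (\<lambda>h. h > (0::real)) (at_right 0)"
        by (simp add: eventually_at_right_field) (auto intro!: exI[of _ 1])
      ultimately show ?thesis
        by eventually_elim (simp add: Zeq divide_less_0_iff)
    qed
  qed
  have "eventually (\<lambda>h. \<forall>x\<in>{..<X1}. Z (ts+h) x \<le> 0) (at_right 0)"
    using ev by (intro eventually_ball_finite) auto
  moreover have "eventually (\<lambda>h. 0 < h \<and> h < T0 - ts) (at_right (0::real))"
    using tsT by (auto simp: eventually_at_right_field intro!: exI[of _ "T0 - ts"])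
  ultimately have "eventually (\<lambda>h::real. False) (at_right 0)"
  proof eventually_elim
    case (elim h)
    then have "ts + h \<in> S" using ts0 by (auto simp: S_def)
    then have "ts + h \<le> ts" unfolding ts_def using bdd by (rule cSup_upper)
    then show False using elim by simp
  qed
  then show False by simp
qed


lemma real_suminf_swap:
  fixes a :: "nat \<Rightarrow> nat \<Rightarrow> real"
  assumes nn: "\<And>i j. 0 \<le> a i j" and s1: "\<And>i. summable (a i)"
    and s2: "summable (\<lambda>i. \<Sum>j. a i j)" and s3: "\<And>j. summable (\<lambda>i. a i j)"
    and s4: "summable (\<lambda>j. \<Sum>i. a i j)"
  shows "(\<Sum>i. \<Sum>j. a i j) = (\<Sum>j. \<Sum>i. a i j)"
proof -
  have swap: "(\<Sum>i. \<Sum>j. f i j) = (\<Sum>j. \<Sum>i. f i j)" for f :: "nat \<Rightarrow> nat \<Rightarrow> ennreal"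
  proof -
    have "(\<Sum>i. \<Sum>j. f i j) = (SUP n. \<Sum>i<n. \<Sum>j. f i j)" by (simp add: suminf_eq_SUP)
    also have "\<dots> = (SUP n. \<Sum>j. \<Sum>i<n. f i j)"
      by (subst suminf_sum) (auto intro: summableI)
    also have "\<dots> = (SUP n. SUP m. \<Sum>j<m. \<Sum>i<n. f i j)" by (simp add: suminf_eq_SUP)
    also have "\<dots> = (SUP m. SUP n. \<Sum>j<m. \<Sum>i<n. f i j)" by (rule SUP_commute)
    also have "\<dots> = (SUP m. SUP n. \<Sum>i<n. \<Sum>j<m. f i j)"
    proof -
      have sw: "(\<Sum>j<m. \<Sum>i<n. f i j) = (\<Sum>i<n. \<Sum>j<m. f i j)" for m n :: nat
        by (rule sum.swap)
      show ?thesis by (simp only: sw)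
    qed
    also have "\<dots> = (SUP m. \<Sum>i. \<Sum>j<m. f i j)" by (simp add: suminf_eq_SUP)
    also have "\<dots> = (SUP m. \<Sum>j<m. \<Sum>i. f i j)"
      by (subst suminf_sum) (auto intro: summableI)
    also have "\<dots> = (\<Sum>j. \<Sum>i. f i j)" by (simp add: suminf_eq_SUP)
    finally show ?thesis .
  qed
  have n1: "\<And>i. 0 \<le> (\<Sum>j. a i j)" using nn s1 by (simp add: suminf_nonneg)
  have n2: "\<And>j. 0 \<le> (\<Sum>i. a i j)" using nn s3 by (simp add: suminf_nonneg)
  have "ennreal (\<Sum>i. \<Sum>j. a i j) = (\<Sum>i. ennreal (\<Sum>j. a i j))"
    using suminf_ennreal2[OF n1 s2] by simp
  also have "\<dots> = (\<Sum>i. \<Sum>j. ennreal (a i j))"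
    using suminf_ennreal2[OF nn s1] by simp
  also have "\<dots> = (\<Sum>j. \<Sum>i. ennreal (a i j))" by (rule swap)
  also have "\<dots> = (\<Sum>j. ennreal (\<Sum>i. a i j))"
    using suminf_ennreal2[OF nn s3] by simp
  also have "\<dots> = ennreal (\<Sum>j. \<Sum>i. a i j)"
    using suminf_ennreal2[OF n2 s4] by simp
  finally show ?thesis
    using n1 n2 s2 s4 by (simp add: suminf_nonneg)
qed

lemma qsum: "(\<Sum>k<Suc (Suc x). qrate lam mu x k * \<phi> k) = Qop lam mu \<phi> x"
proof -
  have "(\<Sum>k<x. qrate lam mu x k * \<phi> k) = (\<Sum>k<x. mu * \<phi> k)"
    by (rule sum.cong) (auto simp: qrate_def)
  then show ?thesis
    by (simp add: Qop_def qrate_def sum_distrib_left algebra_simps)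
qed

lemma G0: "Rstar \<theta> mu 0 x n = (if n \<le> x then 1 else 0)"
proof -
  have "(\<Sum>\<rho>\<le>n. bet \<theta> mu 0 \<rho> * dd \<theta> n x \<rho>) = (\<Sum>\<rho>\<le>n. if \<rho> = 0 then dd \<theta> n x 0 else 0)"
    by (rule sum.cong) (auto simp: bet_def)
  also have "\<dots> = dd \<theta> n x 0" by simp
  finally show ?thesis by (simp add: Rstar_alt dd_def)
qed

lemma G_bound:
  assumes th: "\<theta> > 0" and mu: "mu > 0"
  shows "\<exists>C. \<forall>t\<in>{0..T}. \<forall>x. \<bar>Rstar \<theta> mu t x n\<bar> \<le> C"
proof -
  define B where "B \<rho> = (\<theta>*(exp(mu*T)-1))^\<rho> / fact \<rho> * (1 + \<bar>cc \<theta> (n-\<rho>)\<bar>)" for \<rho>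
  have "\<bar>Rstar \<theta> mu t x n\<bar> \<le> \<bar>cc \<theta> n\<bar> + (\<Sum>\<rho>\<le>n. B \<rho>)" if t: "t \<in> {0..T}" for t x
  proof -
    define E where "E = exp (-(\<theta> + real n)*mu*t)"
    have E1: "\<bar>E\<bar> \<le> 1"
    proof -
      have "0 \<le> (\<theta> + real n)*mu*t" using t th mu by (intro mult_nonneg_nonneg) auto
      then have "-(\<theta> + real n)*mu*t \<le> 0" by (metis mult_minus_left neg_le_0_iff_le)
      then show ?thesis by (simp add: E_def)
    qed
    have bb: "\<bar>bet \<theta> mu t \<rho> * dd \<theta> n x \<rho>\<bar> \<le> B \<rho>" for \<rho>
    proof -
      have a0: "0 \<le> \<theta>*(exp(mu*t)-1)" using t th mu by simp
      have a1: "\<theta>*(exp(mu*t)-1) \<le> \<theta>*(exp(mu*T)-1)" using t th mu by simp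
      have "\<bar>bet \<theta> mu t \<rho>\<bar> \<le> (\<theta>*(exp(mu*T)-1))^\<rho> / fact \<rho>"
        unfolding bet_def using a0 a1
        by (simp add: divide_right_mono power_mono)
      moreover have "\<bar>dd \<theta> n x \<rho>\<bar> \<le> 1 + \<bar>cc \<theta> (n-\<rho>)\<bar>" by (auto simp: dd_def abs_if)
      ultimately show ?thesis unfolding B_def abs_mult
        by (intro mult_mono) auto
    qed
    have "\<bar>Rstar \<theta> mu t x n\<bar> \<le> \<bar>cc \<theta> n\<bar> + \<bar>E\<bar> * \<bar>\<Sum>\<rho>\<le>n. bet \<theta> mu t \<rho> * dd \<theta> n x \<rho>\<bar>"
      unfolding Rstar_alt E_def[symmetric] by (metis abs_mult abs_triangle_ineq)
    also have "\<dots> \<le> \<bar>cc \<theta> n\<bar> + 1 * \<bar>\<Sum>\<rho>\<le>n. bet \<theta> mu t \<rho> * dd \<theta> n x \<rho>\<bar>"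
      using E1 by (intro add_left_mono mult_right_mono) auto
    also have "\<dots> \<le> \<bar>cc \<theta> n\<bar> + (\<Sum>\<rho>\<le>n. B \<rho>)"
    proof -
      have "(\<Sum>\<rho>\<le>n. \<bar>bet \<theta> mu t \<rho> * dd \<theta> n x \<rho>\<bar>) \<le> (\<Sum>\<rho>\<le>n. B \<rho>)"
        by (rule sum_mono) (rule bb)
      then have "\<bar>\<Sum>\<rho>\<le>n. bet \<theta> mu t \<rho> * dd \<theta> n x \<rho>\<bar> \<le> (\<Sum>\<rho>\<le>n. B \<rho>)"
        by (rule order_trans[OF sum_abs])
      then show ?thesis by simp
    qed
    finally show ?thesis .
  qed
  then show ?thesis by blast
qed

locale qproc =
  fixes lam mu :: real and P :: "real \<Rightarrow> nat \<Rightarrow> nat \<Rightarrow> real"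
  assumes lam: "lam > 0" and mu: "mu > 0" and TF: "transition_function P"
    and QM: "has_qmatrix P (qrate lam mu)"
begin

lemma nn: "t \<ge> 0 \<Longrightarrow> 0 \<le> P t x y" using TF by (simp add: transition_function_def)
lemma sm: "t \<ge> 0 \<Longrightarrow> summable (P t x)" using TF by (simp add: transition_function_def)
lemma le1: "t \<ge> 0 \<Longrightarrow> (\<Sum>y. P t x y) \<le> 1" using TF by (simp add: transition_function_def)
lemma P0: "P 0 x y = (if x = y then 1 else 0)" using TF by (simp add: transition_function_def)
lemma CK: "s \<ge> 0 \<Longrightarrow> t \<ge> 0 \<Longrightarrow> P (s + t) x y = (\<Sum>k. P s x k * P t k y)"
  using TF by (simp add: transition_function_def)
lemma Pc0: "((\<lambda>t. P t x x) \<longlongrightarrow> 1) (at_right 0)" using TF by (simp add: transition_function_def)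

lemma Ple1: "t \<ge> 0 \<Longrightarrow> P t x y \<le> 1"
proof -
  assume t: "t \<ge> 0"
  have "sum (P t x) {y} \<le> (\<Sum>y. P t x y)"
    by (rule sum_le_suminf) (use t sm nn in auto)
  then show ?thesis using le1[OF t, of x] by simp
qed

lemma qlim: "((\<lambda>h. (P h x k - (if x = k then 1 else 0)) / h) \<longlongrightarrow> qrate lam mu x k) (at_right 0)"
proof -
  have "((\<lambda>t. P t x k) has_real_derivative qrate lam mu x k) (at_right 0)"
    using QM by (simp add: has_qmatrix_def)
  then have "((\<lambda>y. (P y x k - P 0 x k) / (y - 0)) \<longlongrightarrow> qrate lam mu x k) (at_right 0)"
    by (simp only: has_field_derivative_iff)
  then show ?thesis by (simp add: P0)
qed

lemma wsum:
  assumes t: "t \<ge> 0" and \<phi>: "\<And>k. 0 \<le> \<phi> k" "\<And>k. \<phi> k \<le> 1"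
  shows "summable (\<lambda>k. P t x k * \<phi> k)"
    and "0 \<le> (\<Sum>k. P t x k * \<phi> k)" and "(\<Sum>k. P t x k * \<phi> k) \<le> 1"
proof -
  show s: "summable (\<lambda>k. P t x k * \<phi> k)"
    by (rule summable_comparison_test'[OF sm[OF t, of x], of 0])
      (use nn[OF t] \<phi> in \<open>auto simp: abs_mult intro: mult_left_le\<close>)
  show "0 \<le> (\<Sum>k. P t x k * \<phi> k)"
    by (rule suminf_nonneg[OF s]) (simp add: nn[OF t] \<phi>)
  have "(\<Sum>k. P t x k * \<phi> k) \<le> (\<Sum>k. P t x k)"
    by (rule suminf_le[OF _ s sm[OF t]]) (simp add: nn[OF t] \<phi> mult_left_le)
  then show "(\<Sum>k. P t x k * \<phi> k) \<le> 1" using le1[OF t, of x] by simp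
qed

lemma gen:
  assumes \<phi>: "\<And>k. 0 \<le> \<phi> k" "\<And>k. \<phi> k \<le> 1"
  shows "((\<lambda>h. ((\<Sum>k. P h x k * \<phi> k) - \<phi> x)/h) \<longlongrightarrow> Qop lam mu \<phi> x) (at_right 0)"
proof -
  define N where "N = Suc (Suc x)"
  have xN: "x < N" by (simp add: N_def)
  have qs: "(\<Sum>k<N. qrate lam mu x k * \<phi> k) = Qop lam mu \<phi> x"
    unfolding N_def by (rule qsum)
  have qs1: "(\<Sum>k<N. qrate lam mu x k) = 0"
    using qsum[of lam mu x "\<lambda>_. 1"] unfolding N_def by (simp add: Qop_def)
  define A where "A h = (\<Sum>k<N. (P h x k - (if x = k then 1 else 0))/h * \<phi> k)" for h
  define Bq where "Bq h = (\<Sum>k<N. (P h x k - (if x = k then 1 else 0))/h)" for h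
  have At: "(A \<longlongrightarrow> Qop lam mu \<phi> x) (at_right 0)"
    unfolding A_def qs[symmetric] by (intro tendsto_sum tendsto_mult_right qlim)
  have Bt0: "(Bq \<longlongrightarrow> (\<Sum>k<N. qrate lam mu x k)) (at_right 0)"
    unfolding Bq_def by (intro tendsto_sum qlim)
  then have Bt: "(Bq \<longlongrightarrow> 0) (at_right 0)" by (simp only: qs1)
  define rem where "rem h = (\<Sum>j. P h x (j + N) * \<phi> (j + N))" for h
  have Aeq: "A h = ((\<Sum>k<N. P h x k * \<phi> k) - \<phi> x)/h" for h
  proof -
    have "A h = (\<Sum>k<N. P h x k * \<phi> k / h - (if x = k then \<phi> k else 0) / h)"
      unfolding A_def by (rule sum.cong) (auto simp: diff_divide_distrib algebra_simps)
    also have "\<dots> = (\<Sum>k<N. P h x k * \<phi> k) / h - \<phi> x / h"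
      using xN by (simp add: sum_subtractf sum_divide_distrib[symmetric])
    finally show ?thesis by (simp add: diff_divide_distrib)
  qed
  have Beq: "Bq h = ((\<Sum>k<N. P h x k) - 1)/h" for h
  proof -
    have "Bq h = (\<Sum>k<N. P h x k / h - (if x = k then 1 else 0) / h)"
      unfolding Bq_def by (rule sum.cong) (auto simp: diff_divide_distrib)
    also have "\<dots> = (\<Sum>k<N. P h x k) / h - 1 / h"
      using xN by (simp add: sum_subtractf sum_divide_distrib[symmetric])
    finally show ?thesis by (simp add: diff_divide_distrib)
  qed
  have main: "((\<Sum>k. P h x k * \<phi> k) - \<phi> x)/h = A h + rem h / h"
    and rb: "0 \<le> rem h / h" "rem h / h \<le> - Bq h" if h: "h > 0" for h
  proof -
    have h0: "h \<ge> 0" using h by simp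
    have s: "summable (\<lambda>k. P h x k * \<phi> k)" using wsum(1)[where t=h and \<phi>=\<phi> and x=x] h0 \<phi> by blast
    have spl: "(\<Sum>k. P h x k * \<phi> k) = rem h + (\<Sum>k<N. P h x k * \<phi> k)"
      unfolding rem_def by (rule suminf_split_initial_segment[OF s])
    then show "((\<Sum>k. P h x k * \<phi> k) - \<phi> x)/h = A h + rem h / h"
      by (simp add: Aeq add_divide_distrib diff_divide_distrib)
    have sN: "summable (\<lambda>j. P h x (j + N) * \<phi> (j + N))"
      using summable_iff_shift[of "\<lambda>k. P h x k * \<phi> k" N] s by simp
    have sN2: "summable (\<lambda>j. P h x (j + N))"
      using summable_iff_shift[of "P h x" N] sm[OF h0] by simp
    have rnn: "0 \<le> rem h" unfolding rem_def
      by (rule suminf_nonneg) (use sN nn[OF h0] \<phi> in auto)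
    then show "0 \<le> rem h / h" using h by simp
    have "rem h \<le> (\<Sum>j. P h x (j + N))" unfolding rem_def
      by (rule suminf_le) (use sN sN2 nn[OF h0] \<phi> in \<open>auto intro: mult_left_le\<close>)
    also have "(\<Sum>j. P h x (j + N)) = (\<Sum>k. P h x k) - (\<Sum>k<N. P h x k)"
      using suminf_split_initial_segment[OF sm[OF h0], of x N] by simp
    also have "\<dots> \<le> 1 - (\<Sum>k<N. P h x k)" using le1[OF h0, of x] by simp
    finally have "rem h \<le> 1 - (\<Sum>k<N. P h x k)" .
    then have "rem h / h \<le> (1 - (\<Sum>k<N. P h x k)) / h" using h by (simp add: divide_right_mono)
    also have "\<dots> = - Bq h" unfolding Beq by (simp add: diff_divide_distrib)
    finally show "rem h / h \<le> - Bq h" .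
  qed
  have evpos: "eventually (\<lambda>h. h > (0::real)) (at_right 0)"
    by (simp add: eventually_at_right_field) (auto intro!: exI[of _ 1])
  have remt: "((\<lambda>h. rem h / h) \<longlongrightarrow> 0) (at_right 0)"
  proof (rule tendsto_sandwich[where f="\<lambda>_. 0" and h="\<lambda>h. - Bq h"])
    show "eventually (\<lambda>h. 0 \<le> rem h / h) (at_right 0)"
      using evpos by eventually_elim (rule rb(1))
    show "eventually (\<lambda>h. rem h / h \<le> - Bq h) (at_right 0)"
      using evpos by eventually_elim (rule rb(2))
    show "((\<lambda>_. 0) \<longlongrightarrow> (0::real)) (at_right 0)" by simp
    show "((\<lambda>h. - Bq h) \<longlongrightarrow> 0) (at_right 0)" using tendsto_minus[OF Bt] by simp
  qed
  have "((\<lambda>h. A h + rem h / h) \<longlongrightarrow> Qop lam mu \<phi> x + 0) (at_right 0)"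
    by (intro tendsto_add At remt)
  then have "((\<lambda>h. A h + rem h / h) \<longlongrightarrow> Qop lam mu \<phi> x) (at_right 0)" by simp
  then show ?thesis
    by (rule Lim_transform_eventually) (use evpos in \<open>eventually_elim, simp add: main\<close>)
qed

lemma near:
  assumes h: "h \<ge> 0" and \<phi>: "\<And>k. 0 \<le> \<phi> k" "\<And>k. \<phi> k \<le> 1"
  shows "\<bar>(\<Sum>k. P h x k * \<phi> k) - \<phi> x\<bar> \<le> 1 - P h x x"
proof -
  define S where "S = (\<Sum>k. P h x k * \<phi> k)"
  define R where "R = (\<Sum>k. P h x k)"
  have sS: "summable (\<lambda>k. P h x k * \<phi> k)" using wsum(1)[where t=h and \<phi>=\<phi> and x=x] h \<phi> by blast
  have sR: "summable (P h x)" using sm[OF h] .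
  have s1: "(\<lambda>k. if k = x then c else 0) sums c" for c :: real
    using sums_single[of x "\<lambda>_. c"] by simp
  define psf where "psf k = P h x k * \<phi> k - (if k = x then P h x x * \<phi> x else 0)" for k
  define chf where "chf k = P h x k - (if k = x then P h x x else 0)" for k
  have ps: "psf sums (S - P h x x * \<phi> x)" unfolding psf_def S_def
    by (intro sums_diff summable_sums sS s1)
  have ch: "chf sums (R - P h x x)" unfolding chf_def R_def
    by (intro sums_diff summable_sums sR s1)
  have "0 \<le> S - P h x x * \<phi> x"
    by (rule sums_le[OF _ sums_zero ps]) (simp add: psf_def nn[OF h] \<phi>)
  moreover have "S - P h x x * \<phi> x \<le> R - P h x x"
    by (rule sums_le[OF _ ps ch]) (simp add: psf_def chf_def nn[OF h] \<phi> mult_left_le)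
  moreover have "0 \<le> R - P h x x"
    by (rule sums_le[OF _ sums_zero ch]) (simp add: chf_def nn[OF h])
  moreover have "R \<le> 1" unfolding R_def by (rule le1[OF h])
  moreover have "0 \<le> \<phi> x" "\<phi> x \<le> 1" using \<phi> by auto
  moreover have "0 \<le> P h x x" using nn[OF h] .
  moreover have "\<phi> x * (1 - P h x x) = \<phi> x - P h x x * \<phi> x" by (simp add: algebra_simps)
  moreover have "\<phi> x * (1 - P h x x) \<le> 1 - P h x x"
    using \<phi> calculation by (intro mult_left_le_one_le) auto
  moreover have "0 \<le> \<phi> x * (1 - P h x x)"
    using \<phi> calculation by (intro mult_nonneg_nonneg) auto
  ultimately have "- (1 - P h x x) \<le> S - \<phi> x \<and> S - \<phi> x \<le> 1 - P h x x"
    by linarith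
  then show ?thesis unfolding S_def by linarith
qed

definition gg :: "nat \<Rightarrow> real \<Rightarrow> nat \<Rightarrow> real" where
  "gg n t x = (\<Sum>y. P t x y * (if n \<le> y then 1 else 0))"

lemma gg_bounds: "t \<ge> 0 \<Longrightarrow> 0 \<le> gg n t x" "t \<ge> 0 \<Longrightarrow> gg n t x \<le> 1"
  unfolding gg_def using wsum[of t "\<lambda>y. if n \<le> y then 1 else 0"] by auto

lemma gg_CK:
  assumes h: "h \<ge> 0" and t: "t \<ge> 0"
  shows "gg n (h+t) x = (\<Sum>k. P h x k * gg n t k)"
proof -
  define I where "I y = (if n \<le> y then 1 else (0::real))" for y
  have I: "0 \<le> I y" "I y \<le> 1" for y by (auto simp: I_def)
  define a where "a k y = P h x k * (P t k y * I y)" for k y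
  have an: "0 \<le> a k y" for k y by (simp add: a_def nn h t I)
  have aleP: "a k y \<le> P h x k" for k y
  proof -
    have "P t k y * I y \<le> 1" using Ple1[OF t, of k y] I[of y]
      by (intro mult_le_one) auto
    then show ?thesis unfolding a_def using nn[OF h, of x k] by (simp add: mult_left_le)
  qed
  have s1: "summable (a k)" for k unfolding a_def
    by (intro summable_mult) (use wsum(1)[where t=t and \<phi>=I and x=k] t I in blast)
  have rowsum: "(\<Sum>y. a k y) = P h x k * gg n t k" for k
    unfolding a_def gg_def I_def[symmetric] by (rule suminf_mult) (use wsum(1)[where t=t and \<phi>=I and x=k] t I in blast)
  have ggb: "0 \<le> gg n t k" "gg n t k \<le> 1" for k using gg_bounds[OF t] by auto
  have s2: "summable (\<lambda>k. \<Sum>y. a k y)"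
    unfolding rowsum using wsum(1)[where t=h and \<phi>="gg n t" and x=x] h ggb by blast
  have s3: "summable (\<lambda>k. a k y)" for y
    by (rule summable_comparison_test'[OF sm[OF h, of x], of 0]) (simp add: an aleP)
  have colsum: "(\<Sum>k. a k y) = P (h+t) x y * I y" for y
  proof -
    have "(\<Sum>k. a k y) = (\<Sum>k. P h x k * P t k y) * I y"
      unfolding a_def using suminf_mult2[of "\<lambda>k. P h x k * P t k y" "I y"]
        summable_comparison_test'[OF sm[OF h, of x], of 0 "\<lambda>k. P h x k * P t k y"]
        nn[OF h] nn[OF t] Ple1[OF t]
      by (simp add: mult.assoc mult_left_le)
    then show ?thesis using CK[OF h t] by simp
  qed
  have s4: "summable (\<lambda>y. \<Sum>k. a k y)"
    unfolding colsum using wsum(1)[of "h+t" I x] h t I by simp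
  have "gg n (h+t) x = (\<Sum>y. \<Sum>k. a k y)" unfolding colsum gg_def I_def ..
  also have "\<dots> = (\<Sum>k. \<Sum>y. a k y)" by (rule real_suminf_swap[OF an s1 s2 s3 s4, symmetric])
  also have "\<dots> = (\<Sum>k. P h x k * gg n t k)" unfolding rowsum ..
  finally show ?thesis .
qed

lemma gg_deriv:
  assumes t: "t \<ge> 0"
  shows "((\<lambda>h. (gg n (t+h) x - gg n t x)/h) \<longlongrightarrow> Qop lam mu (gg n t) x) (at_right 0)"
proof -
  have ggb: "0 \<le> gg n t k" "gg n t k \<le> 1" for k using gg_bounds[OF t] by auto
  have evpos: "eventually (\<lambda>h. h > (0::real)) (at_right 0)"
    by (simp add: eventually_at_right_field) (auto intro!: exI[of _ 1])
  show ?thesis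
    using gen[of "gg n t" x, OF ggb]
    by (rule Lim_transform_eventually)
      (use evpos in \<open>eventually_elim, simp add: gg_CK[OF _ t] add.commute\<close>)
qed

lemma gg_diffb:
  assumes "0 \<le> t" "t \<le> s"
  shows "\<bar>gg n s x - gg n t x\<bar> \<le> 1 - P (s - t) x x"
proof -
  have ggb: "0 \<le> gg n t k" "gg n t k \<le> 1" for k using gg_bounds[OF assms(1)] by auto
  have "gg n s x = gg n ((s - t) + t) x" by simp
  also have "\<dots> = (\<Sum>k. P (s - t) x k * gg n t k)" using assms by (intro gg_CK) auto
  finally show ?thesis using near[of "s - t" "gg n t" x, OF _ ggb] assms by simp
qed

lemma gg_cont: "continuous_on {0..} (\<lambda>t. gg n t x)"
  unfolding continuous_on_iff
proof (intro ballI allI impI)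
  fix t e :: real assume t: "t \<in> {0..}" and e: "0 < e"
  have "eventually (\<lambda>h. dist (P h x x) 1 < e) (at_right 0)"
    using Pc0[of x] e by (simp add: tendsto_iff)
  then obtain b where b: "b > 0" "\<And>h. h > 0 \<Longrightarrow> h < b \<Longrightarrow> dist (P h x x) 1 < e"
    by (auto simp: eventually_at_right_field)
  show "\<exists>d>0. \<forall>s\<in>{0..}. dist s t < d \<longrightarrow> dist (gg n s x) (gg n t x) < e"
  proof (intro exI[of _ b] conjI ballI impI b(1))
    fix s :: real assume s: "s \<in> {0..}" and st: "dist s t < b"
    consider "s = t" | "t < s" | "s < t" by linarith
    then show "dist (gg n s x) (gg n t x) < e"
    proof cases
      case 1 then show ?thesis using e by simp
    next
      case 2
      have "\<bar>gg n s x - gg n t x\<bar> \<le> 1 - P (s - t) x x" using t 2 by (intro gg_diffb) auto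
      moreover have "dist (P (s-t) x x) 1 < e" using b(2)[of "s - t"] 2 st by (simp add: dist_real_def)
      ultimately show ?thesis by (simp add: dist_real_def)
    next
      case 3
      have "\<bar>gg n t x - gg n s x\<bar> \<le> 1 - P (t - s) x x" using s 3 by (intro gg_diffb) auto
      moreover have "dist (P (t-s) x x) 1 < e" using b(2)[of "t - s"] 3 st by (simp add: dist_real_def)
      ultimately show ?thesis by (simp add: dist_real_def abs_minus_commute)
    qed
  qed
qed

lemma gg0: "gg n 0 x = (if n \<le> x then 1 else 0)"
proof -
  have "(\<lambda>y. P 0 x y * (if n \<le> y then 1 else 0)) = (\<lambda>y. if y = x then (if n \<le> x then 1 else 0) else 0)"
    by (auto simp: P0)
  then show ?thesis unfolding gg_def using sums_single[of x "\<lambda>_. (if n \<le> x then 1 else 0::real)"]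
    by (simp add: sums_iff)
qed

lemma gg_eq:
  assumes t: "t \<ge> 0"
  shows "gg n t x = Rstar (lam/mu) mu t x n"
proof -
  define \<theta> where "\<theta> = lam / mu"
  have th: "\<theta> > 0" using lam mu by (simp add: \<theta>_def)
  have lm: "\<theta> * mu = lam" using mu by (simp add: \<theta>_def)
  define u where "u t x = gg n t x - Rstar \<theta> mu t x n" for t x
  have Gc: "continuous_on {0..} (\<lambda>t. Rstar \<theta> mu t x n)" for x
    by (intro continuous_at_imp_continuous_on ballI DERIV_isCont[OF G_deriv[OF th]])
  have Gd: "((\<lambda>h. (Rstar \<theta> mu (t+h) x n - Rstar \<theta> mu t x n)/h) \<longlongrightarrow> Qop lam mu (\<lambda>k. Rstar \<theta> mu t k n) x) (at_right 0)" for t x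
  proof -
    have "((\<lambda>h. (Rstar \<theta> mu (t+h) x n - Rstar \<theta> mu t x n)/h) \<longlongrightarrow> Qop lam mu (\<lambda>k. Rstar \<theta> mu t k n) x) (at 0)"
      using G_deriv[OF th, of mu x n t] by (simp add: DERIV_def lm)
    then show ?thesis by (simp add: filterlim_at_split)
  qed
  have uc: "continuous_on {0..} (\<lambda>t. u t x)" for x
    unfolding u_def by (intro continuous_on_diff gg_cont Gc)
  have ud: "((\<lambda>h. (u (t+h) x - u t x)/h) \<longlongrightarrow> Qop lam mu (u t) x) (at_right 0)" if "t \<ge> 0" for t x
  proof -
    have "((\<lambda>h. (gg n (t+h) x - gg n t x)/h - (Rstar \<theta> mu (t+h) x n - Rstar \<theta> mu t x n)/h)
        \<longlongrightarrow> Qop lam mu (gg n t) x - Qop lam mu (\<lambda>k. Rstar \<theta> mu t k n) x) (at_right 0)"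
      by (intro tendsto_diff gg_deriv that Gd)
    moreover have "(\<lambda>h. (gg n (t+h) x - gg n t x)/h - (Rstar \<theta> mu (t+h) x n - Rstar \<theta> mu t x n)/h)
        = (\<lambda>h. (u (t+h) x - u t x)/h)"
      by (rule ext) (simp add: u_def diff_divide_distrib)
    moreover have "Qop lam mu (gg n t) x - Qop lam mu (\<lambda>k. Rstar \<theta> mu t k n) x = Qop lam mu (u t) x"
      unfolding u_def by (rule Qop_diff[symmetric])
    ultimately show ?thesis by simp
  qed
  have u0: "u 0 x = 0" for x by (simp add: u_def gg0 G0)
  have ub: "\<exists>C. \<forall>t\<in>{0..T}. \<forall>x. \<bar>u t x\<bar> \<le> C" for T
  proof -
    obtain C where C: "\<forall>t\<in>{0..T}. \<forall>x. \<bar>Rstar \<theta> mu t x n\<bar> \<le> C"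
      using G_bound[OF th mu] by blast
    have "\<bar>u t x\<bar> \<le> 1 + C" if "t \<in> {0..T}" for t x
    proof -
      have "\<bar>Rstar \<theta> mu t x n\<bar> \<le> C" using C that by blast
      then have "- C \<le> Rstar \<theta> mu t x n" "Rstar \<theta> mu t x n \<le> C" by (auto simp: abs_le_iff)
      moreover have "0 \<le> gg n t x" "gg n t x \<le> 1" using gg_bounds[of t n x] that by auto
      ultimately show ?thesis unfolding u_def abs_le_iff by auto
    qed
    then show ?thesis by blast
  qed
  have ub1: "\<exists>C. \<forall>t\<in>{0..T}. \<forall>x. u t x \<le> C" for T
  proof -
    obtain C where "\<forall>t\<in>{0..T}. \<forall>x. \<bar>u t x\<bar> \<le> C" using ub by blast
    then show ?thesis by (blast dest: abs_le_D1)
  qed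
  have ub2: "\<exists>C. \<forall>t\<in>{0..T}. \<forall>x. - u t x \<le> C" for T
  proof -
    obtain C where "\<forall>t\<in>{0..T}. \<forall>x. \<bar>u t x\<bar> \<le> C" using ub by blast
    then show ?thesis by (blast dest: abs_le_D2)
  qed
  have le: "u t x \<le> 0" for x
    by (rule maxprin[of lam mu u, OF _ _ uc ud]) (use lam mu t u0 ub1 in auto)
  define v where "v t x = - u t x" for t x
  have vc: "continuous_on {0..} (\<lambda>t. v t x)" for x
    unfolding v_def by (intro continuous_on_minus uc)
  have vd: "((\<lambda>h. (v (t+h) x - v t x)/h) \<longlongrightarrow> Qop lam mu (v t) x) (at_right 0)" if "t \<ge> 0" for t x
  proof -
    have "Qop lam mu (v t) x = - Qop lam mu (u t) x"
      unfolding v_def using Qop_mult[of lam mu "-1" "u t" x] by simp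
    moreover have "(\<lambda>h. (v (t+h) x - v t x)/h) = (\<lambda>h. - ((u (t+h) x - u t x)/h))"
      by (rule ext) (simp add: v_def diff_divide_distrib)
    ultimately show ?thesis using tendsto_minus[OF ud[OF that]] by simp
  qed
  have ge: "v t x \<le> 0" for x
    by (rule maxprin[of lam mu v, OF _ _ vc vd]) (use lam mu t u0 ub2 in \<open>auto simp: v_def\<close>)
  show ?thesis using le[of x] ge[of x] by (simp add: v_def u_def \<theta>_def)
qed

lemma P_eq:
  assumes t: "t \<ge> 0"
  shows "P t x y = Rstar (lam/mu) mu t x y - Rstar (lam/mu) mu t x (Suc y)"
proof -
  have I: "0 \<le> (if m \<le> k then 1 else (0::real))" "(if m \<le> k then 1 else (0::real)) \<le> 1" for m k by auto
  have "gg y t x - gg (Suc y) t x = (\<Sum>k. P t x k * (if y \<le> k then 1 else 0) - P t x k * (if Suc y \<le> k then 1 else 0))"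
    unfolding gg_def by (rule suminf_diff) (intro wsum(1)[OF t I])+
  also have "\<dots> = (\<Sum>k. if k = y then P t x y else 0)"
    by (rule suminf_cong) auto
  also have "\<dots> = P t x y" using sums_single[of y "\<lambda>_. P t x y"] by (simp add: sums_iff)
  finally show ?thesis using gg_eq[OF t] by simp
qed

end

theorem mainTheorem3:
  fixes lam mu :: real and P :: "real \<Rightarrow> nat \<Rightarrow> nat \<Rightarrow> real"
  assumes "lam > 0" and "mu > 0"
    and "transition_function P"
    and "has_qmatrix P (qrate lam mu)"
  shows "\<forall>x y. \<forall>t\<ge>0. P t x y = Rstar (lam / mu) mu t x y - Rstar (lam / mu) mu t x (Suc y)"
proof -
  interpret qproc lam mu P using assms by unfold_locales
  show ?thesis using P_eq by blast
qed

end
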